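(* Let $A=(a_{ij})_{1\le i,j\le n}$ be a complex matrix such that $A^T$ is a Nekrasov matrix. Let $\bar k$ be the smallest index such that $a_{j\bar k}=0$ for all $j>\bar k$, and let $\bar\epsilon_1,\dots,\bar\epsilon_n$ be real numbers with $\bar\epsilon_i=0$ for $i<\bar k$ and, for $i=\bar k,\dots,n$, $0<\bar\epsilon_i<|a_{ii}|-h_i(A^T)$ and $\bar\epsilon_i>\sum_{j=\bar k}^{i-1}\frac{|a_{ji}|\bar\epsilon_j}{|a_{jj}|}$. Define $\bar w_i:=\sum_{j=1}^{i-1}|a_{ji}|\frac{\bar\epsilon_j}{|a_{jj}|}$ and $\bar p_i:=\sum_{j=i+1}^{n}|a_{ji}|\frac{|a_{jj}|-h_j(A^T)-\bar\epsilon_j}{|a_{jj}|}$. Then $$\|A^{-1}\|_1\le \frac{\max_{i\in N}\frac{h_i(A^T)+\bar\epsilon_i}{|a_{ii}|}}{\min_{i\in N}(\bar\epsilon_i-\bar w_i+\bar p_i)}.$$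
   Context: For a complex $n\times n$ matrix $B=(b_{ij})$ with $b_{ii}\ne 0$ for all $i$, define recursively $h_1(B):=\sum_{j\ne 1}|b_{1j}|$ and $h_i(B):=\sum_{j=1}^{i-1}|b_{ij}|\frac{h_j(B)}{|b_{jj}|}+\sum_{j=i+1}^{n}|b_{ij}|$ for $i=2,\dots,n$. $B$ is a Nekrasov matrix if $|b_{ii}|>h_i(B)$ for all $i\in N=\{1,\dots,n\}$. $\|\cdot\|_1$ is the maximum absolute column sum norm. *)

theory Defs
  imports "Jordan_Normal_Form.Matrix" Complex_Main
begin

text \<open>Indices are 0-based: row/column i of the paper corresponds to i-1 here.
  h_i(B) from the paper, computed recursively (n = dim_row B).\<close>

function nek_h :: "complex mat \<Rightarrow> nat \<Rightarrow> real" where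
  "nek_h B i =
     (\<Sum>j<i. cmod (B $$ (i,j)) * nek_h B j / cmod (B $$ (j,j)))
     + (\<Sum>j\<in>{i+1..<dim_row B}. cmod (B $$ (i,j)))"
  by pat_completeness auto
termination by (relation "measure snd") auto

definition nekrasov :: "complex mat \<Rightarrow> bool" where
  "nekrasov B \<longleftrightarrow> dim_row B = dim_col B \<and>
     (\<forall>i<dim_row B. B $$ (i,i) \<noteq> 0) \<and>
     (\<forall>i<dim_row B. cmod (B $$ (i,i)) > nek_h B i)"

definition norm1 :: "complex mat \<Rightarrow> real" where
  "norm1 M = Max ((\<lambda>j. \<Sum>i<dim_row M. cmod (M $$ (i,j))) ` {..<dim_col M})"

end

theory Submission imports Defs "Jordan_Normal_Form.Determinant" begin

lemma key:
  fixes a :: "nat \<Rightarrow> nat \<Rightarrow> complex" and d :: "nat \<Rightarrow> real" and x :: "nat \<Rightarrow> complex"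
  assumes d: "\<forall>j<n. d j \<ge> 0"
  shows "(\<Sum>i<n. (d i * cmod (a i i) - (\<Sum>j<n. if j = i then 0 else d j * cmod (a j i))) * cmod (x i))
     \<le> (\<Sum>j<n. d j * cmod (\<Sum>i<n. a j i * x i))"
proof -
  have each: "d j * cmod (a j j) * cmod (x j) - (\<Sum>i<n. if i = j then 0 else d j * cmod (a j i) * cmod (x i))
     \<le> d j * cmod (\<Sum>i<n. a j i * x i)" if j: "j < n" for j
  proof -
    have split: "(\<Sum>i<n. a j i * x i) = a j j * x j + (\<Sum>i<n. if i = j then 0 else a j i * x i)"
    proof -
      have "(\<Sum>i<n. a j i * x i) = (\<Sum>i<n. (if i = j then a j i * x i else 0) + (if i = j then 0 else a j i * x i))"
        by (rule sum.cong) auto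
      also have "\<dots> = a j j * x j + (\<Sum>i<n. if i = j then 0 else a j i * x i)"
        using j by (simp add: sum.distrib)
      finally show ?thesis .
    qed
    have r: "cmod (\<Sum>i<n. if i = j then 0 else a j i * x i) \<le> (\<Sum>i<n. if i = j then 0 else cmod (a j i) * cmod (x i))"
      by (rule order_trans[OF norm_sum]) (auto simp: norm_mult intro: sum_mono)
    have "cmod (a j j) * cmod (x j) - (\<Sum>i<n. if i = j then 0 else cmod (a j i) * cmod (x i))
        \<le> cmod (\<Sum>i<n. a j i * x i)"
      unfolding split using r norm_diff_ineq[of "a j j * x j" "(\<Sum>i<n. if i = j then 0 else a j i * x i)"]
      by (simp add: norm_mult)
    from mult_left_mono[OF this] d j have "d j * (cmod (a j j) * cmod (x j) - (\<Sum>i<n. if i = j then 0 else cmod (a j i) * cmod (x i)))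
        \<le> d j * cmod (\<Sum>i<n. a j i * x i)" by auto
    moreover have "d j * (\<Sum>i<n. if i = j then 0 else cmod (a j i) * cmod (x i)) = (\<Sum>i<n. if i = j then 0 else d j * cmod (a j i) * cmod (x i))"
      by (simp add: sum_distrib_left if_distrib mult.assoc cong: if_cong)
    ultimately show ?thesis by (simp add: right_diff_distrib mult.assoc)
  qed
  have "(\<Sum>j<n. d j * cmod (a j j) * cmod (x j) - (\<Sum>i<n. if i = j then 0 else d j * cmod (a j i) * cmod (x i)))
     \<le> (\<Sum>j<n. d j * cmod (\<Sum>i<n. a j i * x i))"
    by (rule sum_mono) (use each in auto)
  moreover have "(\<Sum>j<n. d j * cmod (a j j) * cmod (x j) - (\<Sum>i<n. if i = j then 0 else d j * cmod (a j i) * cmod (x i)))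
     = (\<Sum>i<n. (d i * cmod (a i i) - (\<Sum>j<n. if j = i then 0 else d j * cmod (a j i))) * cmod (x i))"
  proof -
    have "(\<Sum>j<n. (\<Sum>i<n. if i = j then 0 else d j * cmod (a j i) * cmod (x i)))
        = (\<Sum>i<n. (\<Sum>j<n. if i = j then 0 else d j * cmod (a j i) * cmod (x i)))"
      by (rule sum.swap)
    also have "\<dots> = (\<Sum>i<n. (\<Sum>j<n. if j = i then 0 else d j * cmod (a j i)) * cmod (x i))"
      by (auto simp: sum_distrib_right intro!: sum.cong)
    finally show ?thesis by (simp add: sum_subtractf left_diff_distrib)
  qed
  ultimately show ?thesis by simp
qed

lemma inv_from_kernel:
  fixes A :: "complex mat"
  assumes A: "A \<in> carrier_mat n n" and ker: "\<And>v. v \<in> carrier_vec n \<Longrightarrow> A *\<^sub>v v = 0\<^sub>v n \<Longrightarrow> v = 0\<^sub>v n"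
  shows "invertible_mat A"
proof -
  have "det A \<noteq> 0" using det_0_iff_vec_prod_zero[OF A] ker by blast
  from det_non_zero_imp_unit[OF A this, of undefined]
  obtain B where B: "B \<in> carrier_mat n n" "B * A = 1\<^sub>m n" "A * B = 1\<^sub>m n"
    unfolding Units_def ring_mat_def by auto
  show ?thesis unfolding invertible_mat_def inverts_mat_def square_mat.simps
    using A B by auto
qed


declare nek_h.simps[simp del]

lemma nek_h_nonneg: "nek_h B i \<ge> 0"
proof (induction B i rule: nek_h.induct)
  case (1 B i)
  have "(\<Sum>j<i. cmod (B $$ (i,j)) * nek_h B j / cmod (B $$ (j,j))) \<ge> 0"
    using 1 by (intro sum_nonneg) auto
  moreover have "(\<Sum>j\<in>{i+1..<dim_row B}. cmod (B $$ (i,j))) \<ge> 0" by (intro sum_nonneg) auto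
  ultimately show ?case by (subst nek_h.simps) simp
qed

lemma split3:
  fixes f :: "nat \<Rightarrow> real"
  assumes "i < n"
  shows "(\<Sum>j<n. f j) = (\<Sum>j<i. f j) + f i + (\<Sum>j\<in>{i+1..<n}. f j)"
proof -
  have "{..<n} = {..<i} \<union> {i..<n}" using assms by auto
  hence "(\<Sum>j<n. f j) = (\<Sum>j<i. f j) + (\<Sum>j\<in>{i..<n}. f j)"
    by (simp add: sum.union_disjoint ivl_disj_int)
  also have "(\<Sum>j\<in>{i..<n}. f j) = f i + (\<Sum>j\<in>{Suc i..<n}. f j)"
    using assms by (rule sum.atLeast_Suc_lessThan)
  finally show ?thesis by simp
qed

theorem corollary4p2:
  fixes A :: "complex mat" and n :: nat and eps :: "nat \<Rightarrow> real" and k :: nat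
  assumes "A \<in> carrier_mat n n" and "0 < n"
    and "nekrasov (transpose_mat A)"
    and k_def: "k = (LEAST k. \<forall>j. k < j \<and> j < n \<longrightarrow> A $$ (j,k) = 0)"
    and "\<forall>i<k. eps i = 0"
    and "\<forall>i. k \<le> i \<and> i < n \<longrightarrow>
           0 < eps i \<and> eps i < cmod (A $$ (i,i)) - nek_h (transpose_mat A) i"
    and "\<forall>i. k \<le> i \<and> i < n \<longrightarrow>
           eps i > (\<Sum>j\<in>{k..<i}. cmod (A $$ (j,i)) * eps j / cmod (A $$ (j,j)))"
  shows "invertible_mat A \<and>
    (\<forall>B. B \<in> carrier_mat n n \<and> inverts_mat A B \<longrightarrow>
      norm1 B \<le>
        Max ((\<lambda>i. (nek_h (transpose_mat A) i + eps i) / cmod (A $$ (i,i))) ` {..<n})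
        / Min ((\<lambda>i. eps i
                 - (\<Sum>j<i. cmod (A $$ (j,i)) * eps j / cmod (A $$ (j,j)))
                 + (\<Sum>j\<in>{i+1..<n}. cmod (A $$ (j,i)) *
                      (cmod (A $$ (j,j)) - nek_h (transpose_mat A) j - eps j)
                      / cmod (A $$ (j,j)))) ` {..<n}))"
proof -
  note Acar = assms(1) and npos = assms(2) and nek = assms(3)
  note eps0 = assms(5) and epsb = assms(6) and epsw = assms(7)
  define C where "C = transpose_mat A"
  define h where "h = nek_h C"
  define d where "d = (\<lambda>i. (nek_h (transpose_mat A) i + eps i) / cmod (A $$ (i,i)))"
  define G where "G = (\<lambda>i. eps i
                 - (\<Sum>j<i. cmod (A $$ (j,i)) * eps j / cmod (A $$ (j,j)))
                 + (\<Sum>j\<in>{i+1..<n}. cmod (A $$ (j,i)) *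
                      (cmod (A $$ (j,j)) - nek_h (transpose_mat A) j - eps j)
                      / cmod (A $$ (j,j))))"
  have dimC: "dim_row C = n" "dim_col C = n" using Acar by (auto simp: C_def)
  have Cij: "C $$ (i,j) = A $$ (j,i)" if "i < n" "j < n" for i j
    using Acar that by (auto simp: C_def)
  have Aii: "A $$ (i,i) \<noteq> 0" if "i < n" for i
    using nek that Cij[of i i] dimC Acar unfolding nekrasov_def C_def by auto
  have Anek: "cmod (A $$ (i,i)) > h i" if "i < n" for i
    using nek that Acar unfolding nekrasov_def h_def C_def by auto
  have hnn: "h i \<ge> 0" for i unfolding h_def by (rule nek_h_nonneg)
  have epsnn: "eps i \<ge> 0" if "i < n" for i
    using eps0 epsb that by (cases "i < k") (auto simp: less_imp_le not_less)
  have slack: "cmod (A $$ (j,j)) - h j - eps j > 0" if "j < n" for j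
  proof (cases "j < k")
    case True thus ?thesis using eps0 Anek[OF that] by auto
  next
    case False thus ?thesis using epsb that unfolding h_def C_def by auto
  qed
  have dnn: "\<forall>j<n. d j \<ge> 0"
    using hnn epsnn unfolding d_def h_def C_def by auto
  have hA: "h i = (\<Sum>j<i. cmod (A $$ (j,i)) * h j / cmod (A $$ (j,j)))
                 + (\<Sum>j\<in>{i+1..<n}. cmod (A $$ (j,i)))" if i: "i < n" for i
  proof -
    have "h i = (\<Sum>j<i. cmod (C $$ (i,j)) * nek_h C j / cmod (C $$ (j,j)))
     + (\<Sum>j\<in>{i+1..<dim_row C}. cmod (C $$ (i,j)))" unfolding h_def by (rule nek_h.simps)
    also have "\<dots> = (\<Sum>j<i. cmod (A $$ (j,i)) * h j / cmod (A $$ (j,j)))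
                 + (\<Sum>j\<in>{i+1..<n}. cmod (A $$ (j,i)))"
      using i by (auto simp: dimC Cij h_def intro!: sum.cong arg_cong2[where f="(+)"])
    finally show ?thesis .
  qed
  have gid: "G i = d i * cmod (A $$ (i,i)) - (\<Sum>j<n. if j = i then 0 else d j * cmod (A $$ (j,i)))"
    if i: "i < n" for i
  proof -
    let ?f = "\<lambda>j. if j = i then 0 else d j * cmod (A $$ (j,i))"
    have s: "(\<Sum>j<n. ?f j) = (\<Sum>j<i. ?f j) + ?f i + (\<Sum>j\<in>{i+1..<n}. ?f j)"
      using i by (rule split3)
    have s1: "(\<Sum>j<i. ?f j) = (\<Sum>j<i. cmod (A $$ (j,i)) * h j / cmod (A $$ (j,j)))
         + (\<Sum>j<i. cmod (A $$ (j,i)) * eps j / cmod (A $$ (j,j)))"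
      unfolding sum.distrib[symmetric]
      by (rule sum.cong) (auto simp: d_def h_def C_def add_divide_distrib algebra_simps)
    have s2: "(\<Sum>j\<in>{i+1..<n}. ?f j) = (\<Sum>j\<in>{i+1..<n}. cmod (A $$ (j,i)))
        - (\<Sum>j\<in>{i+1..<n}. cmod (A $$ (j,i)) *
                      (cmod (A $$ (j,j)) - nek_h (transpose_mat A) j - eps j)
                      / cmod (A $$ (j,j)))"
      unfolding sum_subtractf[symmetric]
    proof (rule sum.cong)
      fix j assume j: "j \<in> {i+1..<n}"
      hence "A $$ (j,j) \<noteq> 0" using Aii by auto
      thus "?f j = cmod (A $$ (j,i)) - cmod (A $$ (j,i)) *
                      (cmod (A $$ (j,j)) - nek_h (transpose_mat A) j - eps j)
                      / cmod (A $$ (j,j))"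
        using j by (simp add: d_def field_simps)
    qed simp
    have di: "d i * cmod (A $$ (i,i)) = h i + eps i"
      using Aii[OF i] by (simp add: d_def h_def C_def)
    show ?thesis unfolding G_def using s s1 s2 di hA[OF i] by (simp add: h_def C_def)
  qed
  have tnn: "cmod (A $$ (j,i)) * (cmod (A $$ (j,j)) - nek_h (transpose_mat A) j - eps j) / cmod (A $$ (j,j)) \<ge> 0"
    if "j < n" for i j
  proof -
    have "cmod (A $$ (j,j)) - nek_h (transpose_mat A) j - eps j > 0" using slack that unfolding h_def C_def by auto
    thus ?thesis by (intro divide_nonneg_nonneg mult_nonneg_nonneg) auto
  qed
  have pnn: "(\<Sum>j\<in>{i+1..<n}. cmod (A $$ (j,i)) *
                      (cmod (A $$ (j,j)) - nek_h (transpose_mat A) j - eps j)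
                      / cmod (A $$ (j,j))) \<ge> 0" for i
  proof (intro sum_nonneg)
    fix j assume "j \<in> {i+1..<n}"
    hence "cmod (A $$ (j,j)) - nek_h (transpose_mat A) j - eps j > 0" using slack unfolding h_def C_def by auto
    thus "cmod (A $$ (j,i)) * (cmod (A $$ (j,j)) - nek_h (transpose_mat A) j - eps j) / cmod (A $$ (j,j)) \<ge> 0"
      by (intro divide_nonneg_nonneg mult_nonneg_nonneg) auto
  qed
  have gpos: "G i > 0" if i: "i < n" for i
  proof (cases "k \<le> i")
    case True
    have "(\<Sum>j<i. cmod (A $$ (j,i)) * eps j / cmod (A $$ (j,j)))
        = (\<Sum>j<k. cmod (A $$ (j,i)) * eps j / cmod (A $$ (j,j)))
          + (\<Sum>j\<in>{k..<i}. cmod (A $$ (j,i)) * eps j / cmod (A $$ (j,j)))"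
    proof -
      have "{..<i} = {..<k} \<union> {k..<i}" using True by auto
      thus ?thesis by (simp add: sum.union_disjoint ivl_disj_int)
    qed
    also have "(\<Sum>j<k. cmod (A $$ (j,i)) * eps j / cmod (A $$ (j,j))) = 0"
      using eps0 by simp
    finally show ?thesis using epsw True i pnn[of i] unfolding G_def by auto
  next
    case False
    hence "i < (LEAST k. \<forall>j. k < j \<and> j < n \<longrightarrow> A $$ (j,k) = 0)" using k_def by simp
    from not_less_Least[OF this] obtain j where j: "i < j" "j < n" "A $$ (j,i) \<noteq> 0" by auto
    let ?t = "\<lambda>j. cmod (A $$ (j,i)) * (cmod (A $$ (j,j)) - nek_h (transpose_mat A) j - eps j)
                      / cmod (A $$ (j,j))"
    have "?t j > 0" using j slack[of j] Aii[of j] unfolding h_def C_def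
      by (intro divide_pos_pos mult_pos_pos) auto
    also have "?t j \<le> (\<Sum>j\<in>{i+1..<n}. ?t j)"
      using j tnn by (intro member_le_sum) auto
    finally have p: "(\<Sum>j\<in>{i+1..<n}. ?t j) > 0" .
    have w: "(\<Sum>j<i. cmod (A $$ (j,i)) * eps j / cmod (A $$ (j,j))) = 0"
      using eps0 False by simp
    show ?thesis using p w eps0 False unfolding G_def by simp
  qed
  have main: "(\<Sum>i<n. G i * cmod (x i)) \<le> (\<Sum>j<n. d j * cmod (\<Sum>i<n. A $$ (j,i) * x i))" for x
  proof -
    have "(\<Sum>i<n. G i * cmod (x i)) = (\<Sum>i<n. (d i * cmod (A $$ (i,i)) - (\<Sum>j<n. if j = i then 0 else d j * cmod (A $$ (j,i)))) * cmod (x i))"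
      using gid by simp
    also have "\<dots> \<le> (\<Sum>j<n. d j * cmod (\<Sum>i<n. A $$ (j,i) * x i))"
      by (rule key[OF dnn])
    finally show ?thesis .
  qed
  have inv: "invertible_mat A"
  proof (rule inv_from_kernel[OF Acar])
    fix v :: "complex vec" assume v: "v \<in> carrier_vec n" and Av: "A *\<^sub>v v = 0\<^sub>v n"
    have "(\<Sum>i<n. A $$ (j,i) * v $ i) = 0" if "j < n" for j
    proof -
      have "(A *\<^sub>v v) $ j = 0" using Av that by simp
      thus ?thesis using Acar v that
        by (simp add: scalar_prod_def lessThan_atLeast0)
    qed
    hence "(\<Sum>i<n. G i * cmod (v $ i)) \<le> 0" using main[of "\<lambda>i. v $ i"] by simp
    moreover have "\<forall>i\<in>{..<n}. G i * cmod (v $ i) \<ge> 0" using gpos by (metis lessThan_iff less_imp_le mult_nonneg_nonneg norm_ge_zero)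
    ultimately have z: "(\<Sum>i<n. G i * cmod (v $ i)) = 0"
      by (meson order_antisym sum_nonneg)
    have "\<forall>i\<in>{..<n}. G i * cmod (v $ i) = 0"
      using sum_nonneg_eq_0_iff[of "{..<n}" "\<lambda>i. G i * cmod (v $ i)"] z \<open>\<forall>i\<in>{..<n}. G i * cmod (v $ i) \<ge> 0\<close>
      by blast
    hence "\<forall>i<n. v $ i = 0" using gpos by (metis lessThan_iff mult_eq_0_iff norm_eq_zero less_irrefl)
    thus "v = 0\<^sub>v n" using v by (intro eq_vecI) auto
  qed
  have fin: "finite (G ` {..<n})" "G ` {..<n} \<noteq> {}" using npos by auto
  define gm where "gm = Min (G ` {..<n})"
  have gm: "gm > 0" "\<And>i. i < n \<Longrightarrow> gm \<le> G i"
    using fin gpos unfolding gm_def by auto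
  have bound: "norm1 B \<le> Max (d ` {..<n}) / gm"
    if B: "B \<in> carrier_mat n n" "inverts_mat A B" for B
  proof -
    have AB: "A * B = 1\<^sub>m n" using B Acar by (simp add: inverts_mat_def)
    have col: "(\<Sum>i<n. cmod (B $$ (i,c))) \<le> Max (d ` {..<n}) / gm" if c: "c < n" for c
    proof -
      have prod: "(\<Sum>i<n. A $$ (j,i) * B $$ (i,c)) = (if j = c then 1 else 0)" if j: "j < n" for j
      proof -
        have "(A * B) $$ (j,c) = (if j = c then 1 else 0)" using AB j c by simp
        thus ?thesis using Acar B j c by (simp add: scalar_prod_def lessThan_atLeast0)
      qed
      have "(\<Sum>j<n. d j * cmod (\<Sum>i<n. A $$ (j,i) * B $$ (i,c))) = (\<Sum>j<n. if j = c then d j else 0)"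
        by (rule sum.cong) (auto simp: prod)
      also have "\<dots> = d c" using c by simp
      also have "\<dots> \<le> Max (d ` {..<n})" using c by simp
      finally have r: "(\<Sum>i<n. G i * cmod (B $$ (i,c))) \<le> Max (d ` {..<n})"
        using main[of "\<lambda>i. B $$ (i,c)"] by simp
      have "gm * (\<Sum>i<n. cmod (B $$ (i,c))) \<le> (\<Sum>i<n. G i * cmod (B $$ (i,c)))"
        unfolding sum_distrib_left using gm by (intro sum_mono mult_right_mono) auto
      with r have "(\<Sum>i<n. cmod (B $$ (i,c))) * gm \<le> Max (d ` {..<n})" by (simp add: mult.commute)
      thus ?thesis using gm by (simp add: pos_le_divide_eq)
    qed
    show ?thesis unfolding norm1_def using B col npos
      by (subst Max_le_iff) auto
  qed
  show ?thesis using inv bound unfolding d_def G_def gm_def by blast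
qed

end
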